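(* Let $G$ be a finite $p$-group for some prime $p$, and let $X(G)$ be the subgroup generated by all normal subgroups $N$ of $G$ satisfying $\eta(G/N) = \eta(G)$. If some maximal cyclic subgroup of $G$ is normal in $G$, then $X(G)$ is cyclic.
   Context: A cyclic subgroup $C$ of a group $G$ is maximal cyclic if there is no cyclic subgroup $D$ of $G$ with $C < D$. $\eta(G)$ denotes the number of conjugacy classes of maximal cyclic subgroups of $G$ (for the trivial group, $\eta = 1$). *)

theory Defs
  imports "HOL-Algebra.Algebra"
begin

definition cyclic_subgroup :: "('a, 'b) monoid_scheme \<Rightarrow> 'a set \<Rightarrow> bool" where
  "cyclic_subgroup G H \<longleftrightarrow> subgroup H G \<and> cyclic_group (G\<lparr>carrier := H\<rparr>)"

definition max_cyclic_subgroup :: "('a, 'b) monoid_scheme \<Rightarrow> 'a set \<Rightarrow> bool" where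
  "max_cyclic_subgroup G C \<longleftrightarrow>
     cyclic_subgroup G C \<and> \<not> (\<exists>D. cyclic_subgroup G D \<and> C \<subset> D)"

definition subgroup_conj_rel :: "('a, 'b) monoid_scheme \<Rightarrow> ('a set \<times> 'a set) set" where
  "subgroup_conj_rel G =
     {(C, D). max_cyclic_subgroup G C \<and> max_cyclic_subgroup G D \<and>
              (\<exists>g \<in> carrier G. D = (g <#\<^bsub>G\<^esub> C) #>\<^bsub>G\<^esub> inv\<^bsub>G\<^esub> g)}"

definition eta :: "('a, 'b) monoid_scheme \<Rightarrow> nat" where
  "eta G = card ({C. max_cyclic_subgroup G C} // subgroup_conj_rel G)"

definition X_subgroup :: "('a, 'b) monoid_scheme \<Rightarrow> 'a set" where
  "X_subgroup G = generate G (\<Union> {N. N \<lhd> G \<and> eta (G Mod N) = eta G})"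

end

theory Submission
  imports Defs
begin

lemma (in group) generate_range:
  assumes "x \<in> carrier G" shows "generate G {x} = range (\<lambda>n::int. x [^] n)"
  unfolding generate_pow[OF assms] by blast

lemma (in group) cyc_iff:
  "cyclic_subgroup G H \<longleftrightarrow> (\<exists>x\<in>carrier G. H = generate G {x})"
proof
  assume a: "cyclic_subgroup G H"
  then have sg: "subgroup H G" and cg: "cyclic_group (G\<lparr>carrier := H\<rparr>)"
    by (auto simp: cyclic_subgroup_def)
  interpret S: group "G\<lparr>carrier := H\<rparr>" using sg by (rule subgroup_imp_group)
  have "\<exists>x\<in>carrier (G\<lparr>carrier := H\<rparr>). carrier (G\<lparr>carrier := H\<rparr>) = range (\<lambda>n::int. x [^]\<^bsub>G\<lparr>carrier := H\<rparr>\<^esub> n)"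
    using cg S.cyclic_group by blast
  then obtain x where x0: "x \<in> carrier (G\<lparr>carrier := H\<rparr>)" and eq0: "carrier (G\<lparr>carrier := H\<rparr>) = range (\<lambda>n::int. x [^]\<^bsub>G\<lparr>carrier := H\<rparr>\<^esub> n)"
    by blast
  have cH: "carrier (G\<lparr>carrier := H\<rparr>) = H" by simp
  have x: "x \<in> H" using x0 unfolding cH .
  have eq: "H = range (\<lambda>n::int. x [^]\<^bsub>G\<lparr>carrier := H\<rparr>\<^esub> n)" using eq0 unfolding cH .
  have xc: "x \<in> carrier G" using x sg subgroup.subset by blast
  have fg: "(\<lambda>n::int. x [^]\<^bsub>G\<lparr>carrier := H\<rparr>\<^esub> n) = (\<lambda>n::int. x [^] n)"
    using int_pow_consistent[OF sg x] by (intro ext) (rule sym)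
  have "H = range (\<lambda>n::int. x [^] n)" using eq[unfolded fg] .
  then have "H = generate G {x}" using generate_range[OF xc] by (simp only:)
  then show "\<exists>x\<in>carrier G. H = generate G {x}" using xc by blast
next
  assume "\<exists>x\<in>carrier G. H = generate G {x}"
  then obtain x where xc: "x \<in> carrier G" and H: "H = generate G {x}" by blast
  have sg: "subgroup H G" using H generate_is_subgroup xc by simp
  interpret S: group "G\<lparr>carrier := H\<rparr>" using sg by (rule subgroup_imp_group)
  have x: "x \<in> H" unfolding H by (rule generate.incl) simp
  have r: "H = range (\<lambda>n::int. x [^] n)" using H generate_range[OF xc] by (simp only:)
  have fg: "(\<lambda>n::int. x [^]\<^bsub>G\<lparr>carrier := H\<rparr>\<^esub> n) = (\<lambda>n::int. x [^] n)"
    using int_pow_consistent[OF sg x] by (intro ext) (rule sym)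
  have cH: "carrier (G\<lparr>carrier := H\<rparr>) = H" by simp
  have "carrier (G\<lparr>carrier := H\<rparr>) = range (\<lambda>n::int. x [^]\<^bsub>G\<lparr>carrier := H\<rparr>\<^esub> n)"
    unfolding fg cH by (rule r)
  then have "cyclic_group (G\<lparr>carrier := H\<rparr>)"
    unfolding S.cyclic_group using x unfolding cH by blast
  then show "cyclic_subgroup G H" using sg by (simp add: cyclic_subgroup_def)
qed

lemma (in group) sub_cyclic:
  assumes H: "subgroup H G" and sub: "H \<subseteq> generate G {c}" and c: "c \<in> carrier G"
  shows "\<exists>x\<in>carrier G. H = generate G {x}"
proof (cases "\<exists>n::int. n > 0 \<and> c [^] n \<in> H")
  case True
  then obtain n0 :: int where n0: "n0 > 0" "c [^] n0 \<in> H" by blast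
  define m where "m = (LEAST k::nat. k > 0 \<and> c [^] (int k) \<in> H)"
  have ex: "nat n0 > 0 \<and> c [^] (int (nat n0)) \<in> H" using n0 by simp
  have m: "m > 0 \<and> c [^] (int m) \<in> H" unfolding m_def using LeastI[of "\<lambda>k. k > 0 \<and> c [^] (int k) \<in> H" "nat n0"] ex by blast
  have mless: "\<And>k. 0 < k \<Longrightarrow> k < m \<Longrightarrow> c [^] (int k) \<notin> H"
    using not_less_Least m_def by blast
  let ?g = "c [^] (int m)"
  have gc: "?g \<in> carrier G" using c by simp
  have "H = generate G {?g}"
  proof
    show "generate G {?g} \<subseteq> H" using m H generate_subgroup_incl by auto
  next
    show "H \<subseteq> generate G {?g}"
    proof
      fix x assume xH: "x \<in> H"
      then obtain k :: int where xk: "x = c [^] k" using sub generate_pow[OF c] by auto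
      define q where "q = k div int m"
      define r where "r = k mod int m"
      have kqr: "k = int m * q + r" unfolding q_def r_def by simp
      have r0: "0 \<le> r" "r < int m" unfolding r_def using m by auto
      have "x = ?g [^] q \<otimes> c [^] r"
        unfolding xk kqr int_pow_mult[OF c] int_pow_pow[OF c] by simp
      then have "c [^] r = inv (?g [^] q) \<otimes> x"
        using c gc xk by (simp add: inv_solve_left)
      moreover have "?g [^] q \<in> H" using m H subgroup_int_pow_closed by blast
      ultimately have crH: "c [^] r \<in> H" using xH H
        by (metis subgroup.m_closed subgroup.m_inv_closed)
      have "r = 0"
      proof (rule ccontr)
        assume "r \<noteq> 0"
        then have "0 < nat r" "nat r < m" using r0 by auto
        moreover have "c [^] (int (nat r)) \<in> H" using crH r0 by simp
        ultimately show False using mless by blast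
      qed
      then have "x = ?g [^] q" using xk kqr int_pow_pow[OF c] by simp
      then show "x \<in> generate G {?g}" using generate_pow[OF gc] by auto
    qed
  qed
  then show ?thesis using gc by blast
next
  case False
  have "H \<subseteq> {\<one>}"
  proof
    fix x assume xH: "x \<in> H"
    then obtain k :: int where xk: "x = c [^] k" using sub generate_pow[OF c] by auto
    have "k = 0"
    proof (rule ccontr)
      assume k: "k \<noteq> 0"
      show False
      proof (cases "k > 0")
        case True then show False using False xH xk by blast
      next
        case f: False
        then have "- k > 0" using k by simp
        moreover have "c [^] (- k) \<in> H" using xH xk int_pow_neg[OF c] H subgroup.m_inv_closed by fastforce
        ultimately show False using False by blast
      qed
    qed
    then show "x \<in> {\<one>}" using xk by simp
  qed
  then have "H = {\<one>}" using H subgroup.one_closed by blast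
  then show ?thesis using generate_one by blast
qed

lemma (in group) conj_img:
  assumes "g \<in> carrier G" "C \<subseteq> carrier G"
  shows "(g <# C) #> inv g = (\<lambda>c. g \<otimes> c \<otimes> inv g) ` C"
  using assms unfolding l_coset_def r_coset_def by auto

lemma (in group) conj_conj:
  assumes "x \<in> carrier G" "y \<in> carrier G" "C \<subseteq> carrier G"
  shows "(\<lambda>c. x \<otimes> c \<otimes> inv x) ` (\<lambda>c. y \<otimes> c \<otimes> inv y) ` C = (\<lambda>c. (x \<otimes> y) \<otimes> c \<otimes> inv (x \<otimes> y)) ` C"
  unfolding image_image
proof (rule image_cong[OF refl])
  fix c assume "c \<in> C"
  then have c: "c \<in> carrier G" using assms by blast
  show "x \<otimes> (y \<otimes> c \<otimes> inv y) \<otimes> inv x = x \<otimes> y \<otimes> c \<otimes> inv (x \<otimes> y)"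
    using assms c by (simp add: inv_mult_group m_assoc)
qed

lemma (in group) conj_one:
  assumes "C \<subseteq> carrier G"
  shows "(\<lambda>c. \<one> \<otimes> c \<otimes> inv \<one>) ` C = C"
proof -
  have "(\<lambda>c. \<one> \<otimes> c \<otimes> inv \<one>) ` C = (\<lambda>c. c) ` C"
    by (rule image_cong[OF refl]) (use assms in auto)
  then show ?thesis by simp
qed

lemma (in group) conj_hom:
  assumes "g \<in> carrier G"
  shows "group_hom G G (\<lambda>c. g \<otimes> c \<otimes> inv g)"
proof -
  have "(\<lambda>c. g \<otimes> c \<otimes> inv g) \<in> hom G G"
  proof -
    have c: "\<And>z. z \<in> carrier G \<Longrightarrow> inv g \<otimes> (g \<otimes> z) = z"
      using assms by (simp add: m_assoc[symmetric])
    show ?thesis using assms by (intro homI) (auto simp: m_assoc c)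
  qed
  then show ?thesis
    by (simp add: group_hom.intro group_hom_axioms.intro is_group)
qed

lemma (in group_hom) hom_conj:
  assumes "g \<in> carrier G" "C \<subseteq> carrier G"
  shows "h ` ((g <# C) #> inv g) = (h g <#\<^bsub>H\<^esub> h ` C) #>\<^bsub>H\<^esub> inv\<^bsub>H\<^esub> (h g)"
proof -
  have hC: "h ` C \<subseteq> carrier H" using assms by auto
  have "h ` ((g <# C) #> inv g) = h ` ((\<lambda>c. g \<otimes> c \<otimes> inv g) ` C)"
    using G.conj_img[OF assms] by simp
  also have "\<dots> = (\<lambda>d. h g \<otimes>\<^bsub>H\<^esub> d \<otimes>\<^bsub>H\<^esub> inv\<^bsub>H\<^esub> (h g)) ` (h ` C)"
    unfolding image_image
    by (rule image_cong[OF refl]) (use assms in auto)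
  also have "\<dots> = (h g <#\<^bsub>H\<^esub> h ` C) #>\<^bsub>H\<^esub> inv\<^bsub>H\<^esub> (h g)"
    using H.conj_img[OF _ hC] assms by simp
  finally show ?thesis .
qed

lemma (in group_hom) cyc_img:
  assumes "cyclic_subgroup G D"
  shows "cyclic_subgroup H (h ` D)"
proof -
  obtain x where x: "x \<in> carrier G" and D: "D = generate G {x}"
    using assms G.cyc_iff by blast
  have "h ` D = generate H {h x}"
    unfolding D using generate_img[of "{x}"] x by simp
  then show ?thesis using H.cyc_iff x by auto
qed

lemma (in group) cyc_subset:
  "cyclic_subgroup G D \<Longrightarrow> D \<subseteq> carrier G"
  unfolding cyclic_subgroup_def using subgroup.subset by blast

lemma (in group) conj_maxcyc:
  assumes m: "max_cyclic_subgroup G C" and g: "g \<in> carrier G"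
  shows "max_cyclic_subgroup G ((\<lambda>c. g \<otimes> c \<otimes> inv g) ` C)"
proof -
  let ?f = "\<lambda>c. g \<otimes> c \<otimes> inv g"
  let ?fi = "\<lambda>c. inv g \<otimes> c \<otimes> inv (inv g)"
  have Cc: "cyclic_subgroup G C" using m by (simp add: max_cyclic_subgroup_def)
  have Csub: "C \<subseteq> carrier G" using Cc cyc_subset by blast
  interpret f: group_hom G G "?f" using conj_hom[OF g] .
  interpret fi: group_hom G G "?fi" using conj_hom[of "inv g"] g by simp
  have bk: "?fi ` ?f ` S = S" if "S \<subseteq> carrier G" for S
    using conj_conj[of "inv g" g S] conj_one[of S] that g by simp
  have fC: "cyclic_subgroup G (?f ` C)" using f.cyc_img[OF Cc] .
  have "\<not> (\<exists>D. cyclic_subgroup G D \<and> ?f ` C \<subset> D)"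
  proof
    assume "\<exists>D. cyclic_subgroup G D \<and> ?f ` C \<subset> D"
    then obtain D where D: "cyclic_subgroup G D" "?f ` C \<subset> D" by blast
    have "?fi ` ?f ` C \<subseteq> ?fi ` D" using D(2) by blast
    moreover have "?fi ` ?f ` C \<noteq> ?fi ` D"
    proof
      assume "?fi ` ?f ` C = ?fi ` D"
      then have "?f ` ?fi ` ?f ` C = ?f ` ?fi ` D" by simp
      moreover have "?f ` ?fi ` S = S" if "S \<subseteq> carrier G" for S
        using conj_conj[of g "inv g" S] conj_one[of S] that g by simp
      moreover have "?f ` C \<subseteq> carrier G" using fC cyc_subset by blast
      ultimately have "?f ` C = D" using cyc_subset[OF D(1)] by simp
      then show False using D(2) by blast
    qed
    ultimately have "C \<subset> ?fi ` D" using bk[OF Csub] by auto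
    moreover have "cyclic_subgroup G (?fi ` D)" using fi.cyc_img[OF D(1)] .
    ultimately show False using m by (auto simp: max_cyclic_subgroup_def)
  qed
  then show ?thesis using fC by (simp add: max_cyclic_subgroup_def)
qed

lemma (in group) maxcyc_subset:
  "max_cyclic_subgroup G C \<Longrightarrow> C \<subseteq> carrier G"
  unfolding max_cyclic_subgroup_def using cyc_subset by blast

lemma (in group) rel_iff:
  "(C, D) \<in> subgroup_conj_rel G \<longleftrightarrow>
   max_cyclic_subgroup G C \<and> max_cyclic_subgroup G D \<and>
   (\<exists>g\<in>carrier G. D = (\<lambda>c. g \<otimes> c \<otimes> inv g) ` C)"
proof
  assume a: "(C, D) \<in> subgroup_conj_rel G"
  then have m: "max_cyclic_subgroup G C" "max_cyclic_subgroup G D"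
    and "\<exists>g \<in> carrier G. D = (g <# C) #> inv g"
    unfolding subgroup_conj_rel_def by auto
  then obtain g where g: "g \<in> carrier G" "D = (g <# C) #> inv g" by blast
  then have "D = (\<lambda>c. g \<otimes> c \<otimes> inv g) ` C" using conj_img maxcyc_subset[OF m(1)] by simp
  then show "max_cyclic_subgroup G C \<and> max_cyclic_subgroup G D \<and>
   (\<exists>g\<in>carrier G. D = (\<lambda>c. g \<otimes> c \<otimes> inv g) ` C)" using m g by blast
next
  assume a: "max_cyclic_subgroup G C \<and> max_cyclic_subgroup G D \<and>
   (\<exists>g\<in>carrier G. D = (\<lambda>c. g \<otimes> c \<otimes> inv g) ` C)"
  then obtain g where g: "g \<in> carrier G" "D = (\<lambda>c. g \<otimes> c \<otimes> inv g) ` C" by blast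
  then have "D = (g <# C) #> inv g" using conj_img maxcyc_subset a by simp
  then show "(C, D) \<in> subgroup_conj_rel G" using a g unfolding subgroup_conj_rel_def by blast
qed

lemma (in group) conj_equiv:
  "equiv {C. max_cyclic_subgroup G C} (subgroup_conj_rel G)"
proof (rule equivI)
  show "subgroup_conj_rel G \<subseteq> {C. max_cyclic_subgroup G C} \<times> {C. max_cyclic_subgroup G C}"
    unfolding subgroup_conj_rel_def by auto
  show "refl_on {C. max_cyclic_subgroup G C} (subgroup_conj_rel G)"
  proof (rule refl_onI)
    fix C assume "C \<in> {C. max_cyclic_subgroup G C}"
    then have m: "max_cyclic_subgroup G C" by simp
    have "C = (\<lambda>c. \<one> \<otimes> c \<otimes> inv \<one>) ` C" using conj_one[OF maxcyc_subset[OF m]] by simp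
    then show "(C, C) \<in> subgroup_conj_rel G" using m rel_iff by blast
  qed
  show "sym (subgroup_conj_rel G)"
  proof (rule symI)
    fix C D assume "(C, D) \<in> subgroup_conj_rel G"
    then obtain g where m: "max_cyclic_subgroup G C" "max_cyclic_subgroup G D"
      and g: "g \<in> carrier G" "D = (\<lambda>c. g \<otimes> c \<otimes> inv g) ` C" using rel_iff by blast
    have "(\<lambda>c. inv g \<otimes> c \<otimes> inv (inv g)) ` D = C"
      using g conj_conj[of "inv g" g C] conj_one[OF maxcyc_subset[OF m(1)]] maxcyc_subset[OF m(1)] by simp
    then show "(D, C) \<in> subgroup_conj_rel G" using m g rel_iff[of D C] by (metis inv_closed)
  qed
  show "trans (subgroup_conj_rel G)"
  proof (rule transI)
    fix C D E assume "(C, D) \<in> subgroup_conj_rel G" "(D, E) \<in> subgroup_conj_rel G"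
    then obtain g h where m: "max_cyclic_subgroup G C" "max_cyclic_subgroup G E"
      and g: "g \<in> carrier G" "D = (\<lambda>c. g \<otimes> c \<otimes> inv g) ` C"
      and h: "h \<in> carrier G" "E = (\<lambda>c. h \<otimes> c \<otimes> inv h) ` D" using rel_iff by meson
    have "E = (\<lambda>c. (h \<otimes> g) \<otimes> c \<otimes> inv (h \<otimes> g)) ` C"
      using g h conj_conj[of h g C] maxcyc_subset[OF m(1)] by simp
    then show "(C, E) \<in> subgroup_conj_rel G" using m g h rel_iff[of C E] by (metis m_closed)
  qed
qed

lemma (in group) exists_maxcyc:
  assumes fin: "finite (carrier G)" and H: "cyclic_subgroup G H"
  shows "\<exists>D. max_cyclic_subgroup G D \<and> H \<subseteq> D"
proof -
  let ?A = "{D. cyclic_subgroup G D \<and> H \<subseteq> D}"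
  have "?A \<subseteq> Pow (carrier G)" using cyc_subset by blast
  then have "finite ?A" using fin finite_subset by blast
  moreover have "?A \<noteq> {}" using H by blast
  ultimately obtain m where m: "m \<in> ?A" and mx: "\<forall>b\<in>?A. m \<le> b \<longrightarrow> m = b"
    using finite_has_maximal by meson
  have "\<not> (\<exists>D. cyclic_subgroup G D \<and> m \<subset> D)"
  proof
    assume "\<exists>D. cyclic_subgroup G D \<and> m \<subset> D"
    then obtain D where "cyclic_subgroup G D" "m \<subset> D" by blast
    then show False using m mx by blast
  qed
  then show ?thesis using m unfolding max_cyclic_subgroup_def by blast
qed

lemma (in group) N_sub_C:
  assumes fin: "finite (carrier G)" and N: "N \<lhd> G"
    and eta: "eta (G Mod N) = eta G"
    and Cm: "max_cyclic_subgroup G C" and Cn: "C \<lhd> G"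
  shows "N \<subseteq> C"
proof (rule ccontr)
  assume "\<not> N \<subseteq> C"
  then obtain n where n: "n \<in> N" "n \<notin> C" by blast
  interpret Nn: normal N G using N .
  interpret Cc: normal C G using Cn .
  interpret M: group "G Mod N" using Nn.factorgroup_is_group .
  interpret h: group_hom G "G Mod N" "\<lambda>a. N #> a"
    using Nn.r_coset_hom_Mod by (simp add: group_hom_def group_hom_axioms_def is_group M.is_group)
  let ?h = "\<lambda>a. N #> a"
  let ?S = "{C. max_cyclic_subgroup G C}"
  let ?T = "{Q. max_cyclic_subgroup (G Mod N) Q}"
  let ?rS = "subgroup_conj_rel G"
  let ?rT = "subgroup_conj_rel (G Mod N)"
  have eqS: "equiv ?S ?rS" by (rule conj_equiv)
  have eqT: "equiv ?T ?rT" by (rule M.conj_equiv)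
  have "?S \<subseteq> Pow (carrier G)" using maxcyc_subset by blast
  then have "finite ?S" using fin finite_subset by blast
  then have finS: "finite (?S // ?rS)" using finite_quotient equiv_type[OF eqS] by blast
  have nN: "n \<in> carrier G" using n Nn.subset by blast

  have P2: "?h ` D2 \<in> ?T \<and> (?h ` D1, ?h ` D2) \<in> ?rT"
    if D12: "(D1, D2) \<in> ?rS" and hD1: "?h ` D1 \<in> ?T" for D1 D2
  proof -
    obtain g where m: "max_cyclic_subgroup G D1" "max_cyclic_subgroup G D2"
      and g: "g \<in> carrier G" "D2 = (\<lambda>c. g \<otimes> c \<otimes> inv g) ` D1"
      using D12 rel_iff by blast
    have D1s: "D1 \<subseteq> carrier G" using maxcyc_subset[OF m(1)] .
    have hD1s: "?h ` D1 \<subseteq> carrier (G Mod N)" using D1s by auto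
    have "D2 = (g <# D1) #> inv g" using g conj_img[OF g(1) D1s] by simp
    then have "?h ` D2 = (?h g <#\<^bsub>G Mod N\<^esub> ?h ` D1) #>\<^bsub>G Mod N\<^esub> inv\<^bsub>G Mod N\<^esub> (?h g)"
      using h.hom_conj[OF g(1) D1s] by simp
    also have "\<dots> = (\<lambda>c. ?h g \<otimes>\<^bsub>G Mod N\<^esub> c \<otimes>\<^bsub>G Mod N\<^esub> inv\<^bsub>G Mod N\<^esub> (?h g)) ` (?h ` D1)"
      using M.conj_img[OF _ hD1s] g by simp
    finally have e: "?h ` D2 = (\<lambda>c. ?h g \<otimes>\<^bsub>G Mod N\<^esub> c \<otimes>\<^bsub>G Mod N\<^esub> inv\<^bsub>G Mod N\<^esub> (?h g)) ` (?h ` D1)" .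
    have hg: "?h g \<in> carrier (G Mod N)" using g by simp
    have "max_cyclic_subgroup (G Mod N) (?h ` D2)"
      unfolding e using M.conj_maxcyc[OF _ hg] hD1 by simp
    moreover have "(?h ` D1, ?h ` D2) \<in> ?rT"
      using M.rel_iff[of "?h ` D1" "?h ` D2"] hD1 calculation e hg by blast
    ultimately show ?thesis by simp
  qed

  have P1: "\<exists>D. D \<in> ?S \<and> ?h ` D \<in> ?T \<and> K = ?rT``{?h ` D}" if K: "K \<in> ?T // ?rT" for K
  proof -
    obtain Q where KQ: "K = ?rT``{Q}" and Q: "Q \<in> ?T" using K by (rule quotientE)
    have Qc: "cyclic_subgroup (G Mod N) Q" using Q by (simp add: max_cyclic_subgroup_def)
    then obtain x where x: "x \<in> carrier (G Mod N)" and Qx: "Q = generate (G Mod N) {x}"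
      using M.cyc_iff by blast
    obtain q where q: "q \<in> carrier G" and xq: "x = N #> q"
      using x unfolding carrier_FactGroup by blast
    have "cyclic_subgroup G (generate G {q})" using cyc_iff q by blast
    then obtain D where Dm: "max_cyclic_subgroup G D" and Dq: "generate G {q} \<subseteq> D"
      using exists_maxcyc[OF fin] by blast
    have qD: "q \<in> D" using Dq generate.incl[of q "{q}" G] by blast
    have Dc: "cyclic_subgroup G D" using Dm by (simp add: max_cyclic_subgroup_def)
    have hDc: "cyclic_subgroup (G Mod N) (?h ` D)" using h.cyc_img[OF Dc] .
    have hDs: "subgroup (?h ` D) (G Mod N)" using hDc by (simp add: cyclic_subgroup_def)
    have "x \<in> ?h ` D" using xq qD by blast
    then have "Q \<subseteq> ?h ` D" unfolding Qx using M.generate_subgroup_incl[OF _ hDs] by blast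
    then have "Q = ?h ` D" using Q hDc by (auto simp: max_cyclic_subgroup_def)
    then show ?thesis using Dm Q KQ by auto
  qed
  define \<psi> where "\<psi> K = ?rS``{SOME D. D \<in> ?S \<and> ?h ` D \<in> ?T \<and> K = ?rT``{?h ` D}}" for K
  have psi: "\<exists>D. D \<in> ?S \<and> ?h ` D \<in> ?T \<and> K = ?rT``{?h ` D} \<and> \<psi> K = ?rS``{D}"
    if K: "K \<in> ?T // ?rT" for K
    using someI_ex[OF P1[OF K]] unfolding \<psi>_def by blast
  have inj: "inj_on \<psi> (?T // ?rT)"
  proof (rule inj_onI)
    fix K1 K2 assume K1: "K1 \<in> ?T // ?rT" and K2: "K2 \<in> ?T // ?rT" and e: "\<psi> K1 = \<psi> K2"
    obtain D1 where D1: "D1 \<in> ?S" "?h ` D1 \<in> ?T" "K1 = ?rT``{?h ` D1}" "\<psi> K1 = ?rS``{D1}"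
      using psi[OF K1] by blast
    obtain D2 where D2: "D2 \<in> ?S" "?h ` D2 \<in> ?T" "K2 = ?rT``{?h ` D2}" "\<psi> K2 = ?rS``{D2}"
      using psi[OF K2] by blast
    have "(D1, D2) \<in> ?rS" using e D1 D2 eq_equiv_class_iff[OF eqS] by metis
    then have "(?h ` D1, ?h ` D2) \<in> ?rT" using P2 D1 by blast
    then show "K1 = K2" using D1 D2 equiv_class_eq[OF eqT] by metis
  qed
  have into: "\<psi> ` (?T // ?rT) \<subseteq> ?S // ?rS"
  proof
    fix W assume "W \<in> \<psi> ` (?T // ?rT)"
    then obtain K where K: "K \<in> ?T // ?rT" "W = \<psi> K" by blast
    then show "W \<in> ?S // ?rS" using psi[OF K(1)] quotientI by metis
  qed
  have Cc: "cyclic_subgroup G C" using Cm by (simp add: max_cyclic_subgroup_def)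
  obtain c where c: "c \<in> carrier G" and Cg: "C = generate G {c}" using Cc cyc_iff by blast
  have cC: "c \<in> C" unfolding Cg by (rule generate.incl) simp
  have cn: "c \<otimes> n \<in> carrier G" using c nN by simp
  have "cyclic_subgroup G (generate G {c \<otimes> n})" using cyc_iff cn by blast
  then obtain D' where D'm: "max_cyclic_subgroup G D'" and D'g: "generate G {c \<otimes> n} \<subseteq> D'"
    using exists_maxcyc[OF fin] by blast
  have cnD: "c \<otimes> n \<in> D'" using D'g generate.incl[of "c \<otimes> n" "{c \<otimes> n}" G] by blast
  have notrel: "(C, D') \<notin> ?rS"
  proof
    assume "(C, D') \<in> ?rS"
    then obtain g where g: "g \<in> carrier G" "D' = (\<lambda>x. g \<otimes> x \<otimes> inv g) ` C"
      using rel_iff by blast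
    have "D' \<subseteq> C" using g Cc.inv_op_closed2 by auto
    then have "c \<otimes> n \<in> C" using cnD by blast
    then have "inv c \<otimes> (c \<otimes> n) \<in> C" using cC Cc.m_closed Cc.m_inv_closed by blast
    moreover have "inv c \<otimes> (c \<otimes> n) = n" using c nN by (simp add: m_assoc[symmetric])
    ultimately show False using n by simp
  qed
  have CS: "C \<in> ?S" using Cm by simp
  have D'S: "D' \<in> ?S" using D'm by simp
  have neq: "?rS``{C} \<noteq> ?rS``{D'}" using eq_equiv_class_iff[OF eqS CS D'S] notrel by blast
  have hcn: "?h (c \<otimes> n) = ?h c"
  proof -
    have e1: "?h (c \<otimes> n) = ?h c \<otimes>\<^bsub>G Mod N\<^esub> ?h n" using h.hom_mult c nN by blast
    have e2: "?h n = \<one>\<^bsub>G Mod N\<^esub>" using coset_join2[OF nN Nn.subgroup_axioms n(1)] by simp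
    have e3: "?h c \<in> carrier (G Mod N)" using c by simp
    show ?thesis unfolding e1 e2 by (rule M.r_one[OF e3])
  qed
  have D'c: "cyclic_subgroup G D'" using D'm by (simp add: max_cyclic_subgroup_def)
  have hD's: "subgroup (?h ` D') (G Mod N)" using h.cyc_img[OF D'c] by (simp add: cyclic_subgroup_def)
  have hCg: "?h ` C = generate (G Mod N) {?h c}"
    unfolding Cg using h.generate_img[of "{c}"] c by simp
  have "?h c \<in> ?h ` D'" using hcn cnD by (metis image_eqI)
  then have hCD': "?h ` C \<subseteq> ?h ` D'" unfolding hCg using M.generate_subgroup_incl[OF _ hD's] by blast
  have notboth: "\<not> (?rS``{C} \<in> \<psi> ` (?T // ?rT) \<and> ?rS``{D'} \<in> \<psi> ` (?T // ?rT))"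
  proof
    assume a: "?rS``{C} \<in> \<psi> ` (?T // ?rT) \<and> ?rS``{D'} \<in> \<psi> ` (?T // ?rT)"
    then obtain K1 K2 where K1: "K1 \<in> ?T // ?rT" "?rS``{C} = \<psi> K1"
      and K2: "K2 \<in> ?T // ?rT" "?rS``{D'} = \<psi> K2" by blast
    obtain D1 where D1: "D1 \<in> ?S" "?h ` D1 \<in> ?T" "K1 = ?rT``{?h ` D1}" "\<psi> K1 = ?rS``{D1}"
      using psi[OF K1(1)] by blast
    obtain D2 where D2: "D2 \<in> ?S" "?h ` D2 \<in> ?T" "K2 = ?rT``{?h ` D2}" "\<psi> K2 = ?rS``{D2}"
      using psi[OF K2(1)] by blast
    have "(D1, C) \<in> ?rS" using D1 K1 CS eq_equiv_class_iff[OF eqS] by metis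
    then have r1: "?h ` C \<in> ?T" "(?h ` D1, ?h ` C) \<in> ?rT" using P2 D1 by blast+
    have "(D2, D') \<in> ?rS" using D2 K2 D'S eq_equiv_class_iff[OF eqS] by metis
    then have r2: "?h ` D' \<in> ?T" "(?h ` D2, ?h ` D') \<in> ?rT" using P2 D2 by blast+
    have "cyclic_subgroup (G Mod N) (?h ` D')" using h.cyc_img[OF D'c] .
    then have hCeq: "?h ` C = ?h ` D'" using r1(1) hCD' by (auto simp: max_cyclic_subgroup_def)
    have "K1 = ?rT``{?h ` C}" using D1(3) r1(2) equiv_class_eq[OF eqT] by metis
    moreover have "K2 = ?rT``{?h ` D'}" using D2(3) r2(2) equiv_class_eq[OF eqT] by metis
    ultimately have "K1 = K2" using hCeq by simp
    then show False using K1 K2 neq by simp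
  qed
  have "\<exists>Y. Y \<in> ?S // ?rS \<and> \<psi> ` (?T // ?rT) \<subseteq> ?S // ?rS - {Y}"
  proof (cases "?rS``{C} \<in> \<psi> ` (?T // ?rT)")
    case True
    then have "?rS``{D'} \<notin> \<psi> ` (?T // ?rT)" using notboth by simp
    then have "\<psi> ` (?T // ?rT) \<subseteq> ?S // ?rS - {?rS``{D'}}" using into by blast
    then show ?thesis using quotientI[OF D'S] by blast
  next
    case False
    then have "\<psi> ` (?T // ?rT) \<subseteq> ?S // ?rS - {?rS``{C}}" using into by blast
    then show ?thesis using quotientI[OF CS] by blast
  qed
  then obtain Y where Y: "Y \<in> ?S // ?rS" "\<psi> ` (?T // ?rT) \<subseteq> ?S // ?rS - {Y}"
    by blast
  have "card (?T // ?rT) = card (\<psi> ` (?T // ?rT))" using card_image[OF inj] by simp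
  also have "\<dots> \<le> card (?S // ?rS - {Y})" by (rule card_mono[OF _ Y(2)]) (use finS in blast)
  also have "\<dots> < card (?S // ?rS)" using card_Diff1_less[OF finS Y(1)] .
  finally have "eta (G Mod N) < eta G" unfolding eta_def .
  then show False using eta by simp
qed

theorem theorem1p3:
  fixes G :: "('a, 'b) monoid_scheme" and p :: nat
  assumes "group G" and "finite (carrier G)" and "Factorial_Ring.prime p"
    and "\<exists>k. order G = p ^ k"
    and "\<exists>C. max_cyclic_subgroup G C \<and> C \<lhd> G"
  shows "cyclic_subgroup G (X_subgroup G)"
proof -
  interpret group G by fact
  obtain C where Cm: "max_cyclic_subgroup G C" and Cn: "C \<lhd> G" using assms(5) by blast
  have sub: "\<Union> {N. N \<lhd> G \<and> eta (G Mod N) = eta G} \<subseteq> C"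
    using N_sub_C[OF assms(2) _ _ Cm Cn] by blast
  have Csg: "subgroup C G" using Cn by (rule normal_imp_subgroup)
  have Xsub: "X_subgroup G \<subseteq> C"
    unfolding X_subgroup_def by (rule generate_subgroup_incl[OF sub Csg])
  have "\<Union> {N. N \<lhd> G \<and> eta (G Mod N) = eta G} \<subseteq> carrier G"
    using sub subgroup.subset[OF Csg] by blast
  then have Xsg: "subgroup (X_subgroup G) G"
    unfolding X_subgroup_def by (rule generate_is_subgroup)
  have Cc: "cyclic_subgroup G C" using Cm by (simp add: max_cyclic_subgroup_def)
  obtain c where c: "c \<in> carrier G" and Cg: "C = generate G {c}" using Cc cyc_iff by blast
  have "\<exists>x\<in>carrier G. X_subgroup G = generate G {x}"
    using sub_cyclic[OF Xsg _ c] Xsub Cg by blast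
  then show ?thesis using cyc_iff by blast
qed

end
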